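(* Let $k\ge 1$ and let $G$ be a minimally $k$-connected graph with $n$ vertices and maximum degree $\Delta$. Then $$|V_k|\;\ge\;\frac{(k-1)n+2\,(c_F+|E_k|)+\max\{0,\Delta-(k+1)\}}{2k-1}.$$
   Context: All graphs are finite, simple and undirected. A $k$-separator is a set of $k\ge 0$ vertices whose deletion leaves a disconnected graph. A graph is $k$-connected if it has more than $k$ vertices and contains no $(k-1)$-separator. A $k$-connected graph $G$ is minimally $k$-connected if $G-e$ is not $k$-connected for every edge $e$. For a graph $G$: $V_k$ is the set of vertices of degree exactly $k$; $E_k$ is the set of edges of $G$ with both end vertices in $V_k$; $F:=G-V_k$ is the graph obtained by deleting $V_k$; and $c_F$ is the number of connected components of $F$. *)

theory Defs
  imports Complex_Main
begin

definition simple_graph :: "'a set \<Rightarrow> 'a set set \<Rightarrow> bool" where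
  "simple_graph V E \<longleftrightarrow> finite V \<and>
     (\<forall>e\<in>E. \<exists>u v. u \<noteq> v \<and> u \<in> V \<and> v \<in> V \<and> e = {u, v})"

definition adj :: "'a set set \<Rightarrow> 'a \<Rightarrow> 'a \<Rightarrow> bool" where
  "adj E u v \<longleftrightarrow> {u, v} \<in> E"

definition degree :: "'a set set \<Rightarrow> 'a \<Rightarrow> nat" where
  "degree E v = card {u. {v, u} \<in> E}"

definition reachable :: "'a set \<Rightarrow> 'a set set \<Rightarrow> 'a \<Rightarrow> 'a \<Rightarrow> bool" where
  "reachable V E u v \<longleftrightarrow> (u, v) \<in> ({(x, y). x \<in> V \<and> y \<in> V \<and> {x, y} \<in> E})\<^sup>*"

definition connected_graph :: "'a set \<Rightarrow> 'a set set \<Rightarrow> bool" where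
  "connected_graph V E \<longleftrightarrow> V \<noteq> {} \<and> (\<forall>u\<in>V. \<forall>v\<in>V. reachable V E u v)"

definition del_vertices_V :: "'a set \<Rightarrow> 'a set \<Rightarrow> 'a set" where
  "del_vertices_V V S = V - S"

definition del_vertices_E :: "'a set set \<Rightarrow> 'a set \<Rightarrow> 'a set set" where
  "del_vertices_E E S = {e \<in> E. e \<inter> S = {}}"

definition is_separator :: "'a set \<Rightarrow> 'a set set \<Rightarrow> nat \<Rightarrow> 'a set \<Rightarrow> bool" where
  "is_separator V E k S \<longleftrightarrow> S \<subseteq> V \<and> card S = k \<and>
     \<not> connected_graph (del_vertices_V V S) (del_vertices_E E S)"

definition k_connected :: "'a set \<Rightarrow> 'a set set \<Rightarrow> nat \<Rightarrow> bool" where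
  "k_connected V E k \<longleftrightarrow> card V > k \<and> \<not> (\<exists>S. is_separator V E (k - 1) S)"

definition minimally_k_connected :: "'a set \<Rightarrow> 'a set set \<Rightarrow> nat \<Rightarrow> bool" where
  "minimally_k_connected V E k \<longleftrightarrow> k_connected V E k \<and>
     (\<forall>e\<in>E. \<not> k_connected V (E - {e}) k)"

definition Vk :: "'a set \<Rightarrow> 'a set set \<Rightarrow> nat \<Rightarrow> 'a set" where
  "Vk V E k = {v \<in> V. degree E v = k}"

definition Ek :: "'a set \<Rightarrow> 'a set set \<Rightarrow> nat \<Rightarrow> 'a set set" where
  "Ek V E k = {e \<in> E. e \<subseteq> Vk V E k}"

definition max_degree :: "'a set \<Rightarrow> 'a set set \<Rightarrow> nat" where
  "max_degree V E = Max (degree E ` V)"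

definition num_components :: "'a set \<Rightarrow> 'a set set \<Rightarrow> nat" where
  "num_components V E = card ((\<lambda>v. {u \<in> V. reachable V E v u}) ` V)"

definition cF :: "'a set \<Rightarrow> 'a set set \<Rightarrow> nat \<Rightarrow> nat" where
  "cF V E k = num_components (del_vertices_V V (Vk V E k)) (del_vertices_E E (Vk V E k))"

end

theory Submission
  imports Defs
begin

definition sep :: "'a set \<Rightarrow> 'a set set \<Rightarrow> nat \<Rightarrow> 'a set \<Rightarrow> 'a set \<Rightarrow> 'a set \<Rightarrow> 'a set \<Rightarrow> bool" where
 "sep V E k g S A B \<longleftrightarrow> g \<in> E \<and> S \<union> A \<union> B = V \<and> S \<inter> A = {} \<and> S \<inter> B = {} \<and> A \<inter> B = {}
    \<and> card S \<le> k - 1 \<and> g \<inter> A \<noteq> {} \<and> g \<inter> B \<noteq> {} \<and> (\<forall>e\<in>E. e \<noteq> g \<longrightarrow> e \<inter> A = {} \<or> e \<inter> B = {})"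

definition cutfree :: "'a set \<Rightarrow> 'a set set \<Rightarrow> nat \<Rightarrow> bool" where
 "cutfree V E k \<longleftrightarrow> (\<forall>U X Y. U \<union> X \<union> Y = V \<longrightarrow> U \<inter> X = {} \<longrightarrow> U \<inter> Y = {} \<longrightarrow> X \<inter> Y = {}
     \<longrightarrow> X \<noteq> {} \<longrightarrow> Y \<noteq> {} \<longrightarrow> card U \<le> k - 1 \<longrightarrow> (\<exists>e\<in>E. e \<inter> X \<noteq> {} \<and> e \<inter> Y \<noteq> {}))"

lemma sep_sym: "sep V E k g S A B \<Longrightarrow> sep V E k g S B A"
  unfolding sep_def by (metis (no_types) Int_commute Un_commute sup_assoc)

lemma two_el: "e = {u,v} \<Longrightarrow> a \<in> e \<Longrightarrow> b \<in> e \<Longrightarrow> a \<noteq> b \<Longrightarrow> e = {a,b}"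
  by auto

lemma card3:
  assumes "finite X" "X \<subseteq> P \<union> Q \<union> R" "P \<inter> Q = {}" "P \<inter> R = {}" "Q \<inter> R = {}"
  shows "card X = card (X \<inter> P) + card (X \<inter> Q) + card (X \<inter> R)"
proof -
  have "X = (X\<inter>P) \<union> (X\<inter>Q) \<union> (X\<inter>R)" using assms by blast
  then have "card X = card ((X\<inter>P) \<union> (X\<inter>Q) \<union> (X\<inter>R))" by simp
  also have "\<dots> = card ((X\<inter>P) \<union> (X\<inter>Q)) + card (X\<inter>R)"
    by (rule card_Un_disjoint) (use assms in auto)
  also have "card ((X\<inter>P) \<union> (X\<inter>Q)) = card (X\<inter>P) + card (X\<inter>Q)"
    by (rule card_Un_disjoint) (use assms in auto)
  finally show ?thesis .
qed

lemma core:
  assumes sg: "simple_graph V E" and k1: "1 \<le> k"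
    and cf: "cutfree V E k"
    and ex: "\<forall>g\<in>E. \<exists>S A B. sep V E k g S A B"
    and DE: "D \<subseteq> E" and Dne: "D \<noteq> {}"
    and degD: "\<forall>v e. e \<in> D \<longrightarrow> v \<in> e \<longrightarrow> k + 1 \<le> degree E v"
    and twoD: "\<forall>v e. e \<in> D \<longrightarrow> v \<in> e \<longrightarrow> (\<exists>e'\<in>D. e' \<noteq> e \<and> v \<in> e')"
  shows False
proof -
  have finV: "finite V" using sg by (simp add: simple_graph_def)
  have edge: "\<And>e. e \<in> E \<Longrightarrow> \<exists>u v. u \<noteq> v \<and> u \<in> V \<and> v \<in> V \<and> e = {u, v}"
    using sg by (simp add: simple_graph_def)
  define P where "P n \<longleftrightarrow> (\<exists>g S A B. g \<in> D \<and> sep V E k g S A B \<and> card A = n)" for n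
  have "\<exists>n. P n"
  proof -
    obtain g where "g \<in> D" using Dne by blast
    then obtain S A B where "sep V E k g S A B" using ex DE by blast
    then show ?thesis using \<open>g \<in> D\<close> unfolding P_def by blast
  qed
  then have "P (LEAST n. P n)" by (rule LeastI_ex)
  then obtain g S A B where gD: "g \<in> D" and sp: "sep V E k g S A B" and cA: "card A = (LEAST n. P n)"
    unfolding P_def by blast
  have minA: "card A \<le> card A2" if "h \<in> D" "sep V E k h S2 A2 B2" for h S2 A2 B2
  proof -
    have "P (card A2)" using that unfolding P_def by blast
    then show ?thesis using cA Least_le[of P "card A2"] by simp
  qed
  from sp have gE: "g \<in> E" and VS: "S \<union> A \<union> B = V" and d1: "S \<inter> A = {}" "S \<inter> B = {}" "A \<inter> B = {}"
    and cS: "card S \<le> k - 1" and gA: "g \<inter> A \<noteq> {}" and gB: "g \<inter> B \<noteq> {}"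
    and E1: "\<forall>e\<in>E. e \<noteq> g \<longrightarrow> e \<inter> A = {} \<or> e \<inter> B = {}" by (simp_all add: sep_def)
  obtain x where xg: "x \<in> g" and xA: "x \<in> A" using gA by blast
  obtain y where yg: "y \<in> g" and yB: "y \<in> B" using gB by blast
  have gxy: "g = {x,y}"
  proof -
    obtain u v where "g = {u,v}" using edge[OF gE] by blast
    moreover have "x \<noteq> y" using xA yB d1 by blast
    ultimately show ?thesis using two_el xg yg by metis
  qed
  obtain f where fD: "f \<in> D" and fg: "f \<noteq> g" and xf: "x \<in> f" using twoD gD xg by blast
  have fE: "f \<in> E" using fD DE by blast
  obtain T A' B' where sp2: "sep V E k f T A' B'" and xA': "x \<in> A'"
  proof -
    obtain T A0 B0 where s0: "sep V E k f T A0 B0" using ex fE by blast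
    have "x \<in> A0 \<or> x \<in> B0"
    proof -
      have "f \<inter> A0 \<noteq> {}" "f \<inter> B0 \<noteq> {}" and "A0 \<inter> B0 = {}" using s0 by (simp_all add: sep_def)
      moreover obtain a b where "a \<in> f" "a \<in> A0" "b \<in> f" "b \<in> B0" using calculation by blast
      ultimately have "A0 \<inter> B0 = {}" "a \<in> f" "a \<in> A0" "b \<in> f" "b \<in> B0" by auto
      moreover obtain u v where "f = {u,v}" using edge[OF fE] by blast
      ultimately have "f = {a,b}" using two_el by (metis disjoint_iff)
      then show ?thesis using xf \<open>a \<in> A0\<close> \<open>b \<in> B0\<close> by blast
    qed
    then show ?thesis using that s0 sep_sym[OF s0] by blast
  qed
  from sp2 have VT: "T \<union> A' \<union> B' = V" and d2: "T \<inter> A' = {}" "T \<inter> B' = {}" "A' \<inter> B' = {}"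
    and cT: "card T \<le> k - 1" and fB': "f \<inter> B' \<noteq> {}"
    and E2: "\<forall>e\<in>E. e \<noteq> f \<longrightarrow> e \<inter> A' = {} \<or> e \<inter> B' = {}" by (simp_all add: sep_def)
  obtain z where zf: "z \<in> f" and zB': "z \<in> B'" using fB' by blast
  have fxz: "f = {x,z}"
  proof -
    obtain u v where "f = {u,v}" using edge[OF fE] by blast
    moreover have "x \<noteq> z" using xA' zB' d2 by blast
    ultimately show ?thesis using two_el xf zf by metis
  qed
  have minB': "card A \<le> card B'" using minA[OF fD sep_sym[OF sp2]] .
  have "g \<inter> B' = {}" using E2[rule_format, OF gE] fg xA' gxy by auto
  then have yB': "y \<notin> B'" using gxy by auto
  have "f \<inter> B = {}" using E1[rule_format, OF fE] fg xA fxz by auto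
  then have zB: "z \<notin> B" using fxz by auto
  have yA: "y \<notin> A" using yB d1 by blast
  have zA': "z \<notin> A'" using zB' d2 by blast
  define Q3 where "Q3 = A \<inter> A'"
  define L3 where "L3 = (A \<inter> T) \<union> (S \<inter> T) \<union> (S \<inter> A')"
  define Q4 where "Q4 = B \<inter> B'"
  define L4 where "L4 = (B \<inter> T) \<union> (S \<inter> T) \<union> (S \<inter> B')"
  have fins: "finite S" "finite T" "finite A" "finite B" "finite A'" "finite B'"
    using finV VS VT by (auto intro: finite_subset)
  have finL3: "finite L3" unfolding L3_def using fins by auto
  have xL3: "x \<notin> L3" unfolding L3_def using xA xA' d1 d2 by blast
  have L3: "k - 1 \<le> card L3"
  proof (cases "Q3 - {x} = {}")
    case False
    show ?thesis
    proof (rule ccontr)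
      assume "\<not> ?thesis"
      then have cU: "card (L3 \<union> {x}) \<le> k - 1" using xL3 finL3 by simp
      have "L3 \<union> {x} \<union> (Q3 - {x}) \<union> (V - Q3 - L3) = V"
        unfolding L3_def Q3_def using VS VT xA by blast
      moreover have "(L3 \<union> {x}) \<inter> (Q3 - {x}) = {}" "(L3 \<union> {x}) \<inter> (V - Q3 - L3) = {}"
        "(Q3 - {x}) \<inter> (V - Q3 - L3) = {}"
        unfolding L3_def Q3_def using d1 d2 xA xA' by blast+
      moreover have "V - Q3 - L3 \<noteq> {}"
        using yB VS d1 unfolding L3_def Q3_def by blast
      ultimately obtain e where eE: "e \<in> E" and e1: "e \<inter> (Q3 - {x}) \<noteq> {}" and e2: "e \<inter> (V - Q3 - L3) \<noteq> {}"
        using cf False cU unfolding cutfree_def by meson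
      obtain v where ve: "v \<in> e" and vQ: "v \<in> Q3 - {x}" using e1 by blast
      obtain w where we: "w \<in> e" and wY: "w \<in> V - Q3 - L3" using e2 by blast
      have "e \<noteq> g" using ve vQ gxy yA unfolding Q3_def by blast
      moreover have "e \<noteq> f" using ve vQ fxz zA' unfolding Q3_def by blast
      ultimately have "e \<inter> B = {}" "e \<inter> B' = {}" using E1[rule_format, OF eE] E2[rule_format, OF eE] ve vQ unfolding Q3_def by auto
      then have "w \<notin> B" "w \<notin> B'" using we by auto
      then show False using wY VS VT unfolding Q3_def L3_def by blast
    qed
  next
    case True
    have "{u. {x, u} \<in> E} \<subseteq> L3 \<union> {y, z}"
    proof
      fix u assume "u \<in> {u. {x, u} \<in> E}"
      then have uE: "{x,u} \<in> E" by simp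
      then have ux: "u \<noteq> x" "u \<in> V" using edge by (metis doubleton_eq_iff insertI1 insert_commute)+
      show "u \<in> L3 \<union> {y, z}"
      proof (cases "{x,u} = g \<or> {x,u} = f")
        case True
        then show ?thesis using gxy fxz ux by (auto simp: doubleton_eq_iff)
      next
        case False
        then have "{x,u} \<inter> B = {}" "{x,u} \<inter> B' = {}" using E1[rule_format, OF uE] E2[rule_format, OF uE] xA xA' by auto
        then have "u \<notin> B" "u \<notin> B'" by auto
        then have "u \<in> Q3 \<union> L3" using ux VS VT unfolding Q3_def L3_def by blast
        then show ?thesis using True ux by blast
      qed
    qed
    then have "degree E x \<le> card (L3 \<union> {y, z})"
      unfolding degree_def using finL3 by (intro card_mono) auto
    also have "\<dots> \<le> card L3 + card {y, z}" by (rule card_Un_le)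
    also have "card {y, z} \<le> 2" by (cases "y = z") auto
    finally have "degree E x \<le> card L3 + 2" by simp
    moreover have "k + 1 \<le> degree E x" using degD gD xg by blast
    ultimately show ?thesis by simp
  qed
  have cS3: "card S = card (S \<inter> A') + card (S \<inter> T) + card (S \<inter> B')"
    using card3[of S A' T B'] fins VT VS d2 by blast
  have cT3: "card T = card (T \<inter> A) + card (T \<inter> S) + card (T \<inter> B)"
    using card3[of T A S B] fins VT VS d1 by blast
  have cL3: "card L3 = card (A \<inter> T) + card (S \<inter> T) + card (S \<inter> A')"
  proof -
    have "card L3 = card (L3 \<inter> (A \<inter> T)) + card (L3 \<inter> (S \<inter> T)) + card (L3 \<inter> (S \<inter> A'))"
      by (rule card3) (use finL3 d1 d2 in \<open>auto simp: L3_def\<close>)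
    moreover have "L3 \<inter> (A \<inter> T) = A \<inter> T" "L3 \<inter> (S \<inter> T) = S \<inter> T" "L3 \<inter> (S \<inter> A') = S \<inter> A'"
      unfolding L3_def by blast+
    ultimately show ?thesis by simp
  qed
  have finL4: "finite L4" unfolding L4_def using fins by auto
  have cL4: "card L4 = card (B \<inter> T) + card (S \<inter> T) + card (S \<inter> B')"
  proof -
    have "card L4 = card (L4 \<inter> (B \<inter> T)) + card (L4 \<inter> (S \<inter> T)) + card (L4 \<inter> (S \<inter> B'))"
      by (rule card3) (use finL4 d1 d2 in \<open>auto simp: L4_def\<close>)
    moreover have "L4 \<inter> (B \<inter> T) = B \<inter> T" "L4 \<inter> (S \<inter> T) = S \<inter> T" "L4 \<inter> (S \<inter> B') = S \<inter> B'"
      unfolding L4_def by blast+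
    ultimately show ?thesis by simp
  qed
  have cA3: "card A = card (A \<inter> A') + card (A \<inter> T) + card (A \<inter> B')"
    using card3[of A A' T B'] fins VT VS d2 by blast
  have cB3: "card B' = card (B' \<inter> A) + card (B' \<inter> S) + card (B' \<inter> B)"
    using card3[of B' A S B] fins VT VS d1 by blast
  have eqs: "T \<inter> A = A \<inter> T" "T \<inter> S = S \<inter> T" "T \<inter> B = B \<inter> T" "B' \<inter> A = A \<inter> B'" "B' \<inter> S = S \<inter> B'"
    "B' \<inter> B = Q4" unfolding Q4_def by blast+
  have cT3': "card T = card (A \<inter> T) + card (S \<inter> T) + card (B \<inter> T)" using cT3 eqs by simp
  have cB3': "card B' = card (A \<inter> B') + card (S \<inter> B') + card Q4" using cB3 eqs by simp
  have Q4e: "Q4 = {}"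
  proof (rule ccontr)
    assume Q4ne: "Q4 \<noteq> {}"
    have "\<not> card L4 \<le> k - 1"
    proof
      assume cU: "card L4 \<le> k - 1"
      have "L4 \<union> Q4 \<union> (V - Q4 - L4) = V"
        unfolding L4_def Q4_def using VS VT by blast
      moreover have "L4 \<inter> Q4 = {}" "L4 \<inter> (V - Q4 - L4) = {}" "Q4 \<inter> (V - Q4 - L4) = {}"
        unfolding L4_def Q4_def using d1 d2 by blast+
      moreover have "V - Q4 - L4 \<noteq> {}"
        using xA xA' VS d1 d2 unfolding L4_def Q4_def by blast
      ultimately obtain e where eE: "e \<in> E" and e1: "e \<inter> Q4 \<noteq> {}" and e2: "e \<inter> (V - Q4 - L4) \<noteq> {}"
        using cf Q4ne cU unfolding cutfree_def by meson
      obtain v where ve: "v \<in> e" and vQ: "v \<in> Q4" using e1 by blast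
      obtain w where we: "w \<in> e" and wY: "w \<in> V - Q4 - L4" using e2 by blast
      have "e \<noteq> g" using ve vQ gxy yB' xA d1 unfolding Q4_def by blast
      moreover have "e \<noteq> f" using ve vQ fxz zB xA d1 unfolding Q4_def by blast
      ultimately have "e \<inter> A = {}" "e \<inter> A' = {}" using E1[rule_format, OF eE] E2[rule_format, OF eE] ve vQ unfolding Q4_def by auto
      then have "w \<notin> A" "w \<notin> A'" using we by auto
      then show False using wY VS VT unfolding Q4_def L4_def by blast
    qed
    then show False using L3 cL3 cL4 cS3 cT3' cS cT k1 by linarith
  qed
  have "card (A \<inter> A') = 0" using minB' cA3 cB3' Q4e L3 cL3 cS3 cS by simp
  then show False using xA xA' fins by auto
qed



lemma reach_refl: "reachable V E u u"
  by (simp add: reachable_def)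

lemma reach_trans: "reachable V E u v \<Longrightarrow> reachable V E v w \<Longrightarrow> reachable V E u w"
  unfolding reachable_def by (rule rtrancl_trans)

lemma reach_sym: assumes "reachable V E u v" shows "reachable V E v u"
proof -
  let ?r = "{(x, y). x \<in> V \<and> y \<in> V \<and> {x, y} \<in> E}"
  have "?r\<inverse> = ?r" by (auto simp: insert_commute)
  moreover have "(v, u) \<in> (?r\<inverse>)\<^sup>*" using assms unfolding reachable_def by (rule rtrancl_converseI)
  ultimately show ?thesis unfolding reachable_def by simp
qed

lemma reach_mono: "E1 \<subseteq> E2 \<Longrightarrow> reachable V E1 u v \<Longrightarrow> reachable V E2 u v"
  unfolding reachable_def by (erule rtrancl_mono[THEN subsetD, rotated]) auto

lemma reach_edge: "u \<in> V \<Longrightarrow> v \<in> V \<Longrightarrow> {u, v} \<in> E \<Longrightarrow> reachable V E u v"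
  unfolding reachable_def by (rule r_into_rtrancl) simp

lemma reach_closed:
  assumes "reachable V E u v" "u \<in> X" "\<And>a b. a \<in> X \<Longrightarrow> a \<in> V \<Longrightarrow> b \<in> V \<Longrightarrow> {a, b} \<in> E \<Longrightarrow> b \<in> X"
  shows "v \<in> X"
  using assms(1) unfolding reachable_def
proof (induction rule: rtrancl_induct)
  case base then show ?case using assms(2) .
next
  case (step y z) then show ?case using assms(3) by blast
qed

lemma reach_isolated:
  assumes "reachable V E u v" "\<And>w. {u, w} \<notin> E" shows "v = u"
  using reach_closed[OF assms(1), of "{u}"] assms(2) by blast



lemma kconn_cutfree:
  assumes sg: "simple_graph V E" and kc: "k_connected V E k" and k1: "1 \<le> k"
  shows "cutfree V E k"
  unfolding cutfree_def
proof (intro allI impI)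
  fix U X Y
  assume VU: "U \<union> X \<union> Y = V" and d: "U \<inter> X = {}" "U \<inter> Y = {}" "X \<inter> Y = {}"
    and Xne: "X \<noteq> {}" and Yne: "Y \<noteq> {}" and cU: "card U \<le> k - 1"
  show "\<exists>e\<in>E. e \<inter> X \<noteq> {} \<and> e \<inter> Y \<noteq> {}"
  proof (rule ccontr)
    assume nc: "\<not> ?thesis"
    have finV: "finite V" using sg by (simp add: simple_graph_def)
    have cV: "k < card V" using kc by (simp add: k_connected_def)
    obtain a where aX: "a \<in> X" using Xne by blast
    obtain b where bY: "b \<in> Y" using Yne by blast
    have ab: "a \<noteq> b" using aX bY d by blast
    have finU: "finite U" using VU finV by (auto intro: finite_subset)
    have "card (V - U - {a, b}) = card V - card U - 2"
    proof -
      have "card (V - U - {a,b}) = card (V - U) - card {a,b}"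
        by (rule card_Diff_subset) (use aX bY d VU finV in auto)
      moreover have "card (V - U) = card V - card U"
        by (rule card_Diff_subset) (use VU finU in auto)
      ultimately show ?thesis using ab by simp
    qed
    then have "k - 1 - card U \<le> card (V - U - {a, b})" using cV cU by linarith
    then obtain Z where ZP: "Z \<subseteq> V - U - {a, b}" and cZ: "card Z = k - 1 - card U" and finZ: "finite Z"
      by (rule obtain_subset_with_card_n)
    define S where "S = U \<union> Z"
    have "U \<inter> Z = {}" using ZP by blast
    then have cS: "card S = k - 1" unfolding S_def
      using card_Un_disjoint[OF finU finZ] cZ cU by linarith
    have SV: "S \<subseteq> V" unfolding S_def using ZP VU by blast
    have aS: "a \<in> V - S" "b \<in> V - S" unfolding S_def using ZP aX bY d VU by auto
    have "\<not> reachable (V - S) (del_vertices_E E S) a b"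
    proof
      assume r: "reachable (V - S) (del_vertices_E E S) a b"
      have "b \<in> X"
      proof (rule reach_closed[OF r aX])
        fix p q assume pX: "p \<in> X" and "p \<in> V - S" and qV: "q \<in> V - S" and pq: "{p, q} \<in> del_vertices_E E S"
        have "{p,q} \<in> E" using pq by (simp add: del_vertices_E_def)
        then have "q \<notin> Y"
        proof (intro notI)
          assume "{p, q} \<in> E" "q \<in> Y"
          then have "{p,q} \<inter> X \<noteq> {} \<and> {p,q} \<inter> Y \<noteq> {}" using pX by auto
          then show False using nc \<open>{p, q} \<in> E\<close> by (meson bexI)
        qed
        then show "q \<in> X" using qV VU unfolding S_def by blast
      qed
      then show False using bY d by blast
    qed
    then have "\<not> connected_graph (V - S) (del_vertices_E E S)"
      unfolding connected_graph_def using aS by meson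
    then have "is_separator V E (k - 1) S"
      by (simp add: is_separator_def del_vertices_V_def SV cS)
    then show False using kc by (simp add: k_connected_def)
  qed
qed

lemma min_sep_exists:
  assumes sg: "simple_graph V E" and mk: "minimally_k_connected V E k" and k1: "1 \<le> k"
    and cf: "cutfree V E k" and gE: "g \<in> E"
  shows "\<exists>S A B. sep V E k g S A B"
proof -
  have kc: "k_connected V E k" using mk by (simp add: minimally_k_connected_def)
  have "\<not> k_connected V (E - {g}) k" using mk gE by (simp add: minimally_k_connected_def)
  moreover have cV: "k < card V" using kc by (simp add: k_connected_def)
  ultimately obtain S where SV: "S \<subseteq> V" and cS: "card S = k - 1"
    and nc: "\<not> connected_graph (V - S) (del_vertices_E (E - {g}) S)"
    unfolding k_connected_def is_separator_def del_vertices_V_def by blast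
  have finV: "finite V" using sg by (simp add: simple_graph_def)
  have "V - S \<noteq> {}"
  proof
    assume "V - S = {}"
    then have "V \<subseteq> S" by blast
    then have "card V \<le> card S" using finV SV by (simp add: card_mono finite_subset)
    then show False using cV cS by simp
  qed
  then obtain u w where uV: "u \<in> V - S" and wV: "w \<in> V - S"
    and nr: "\<not> reachable (V - S) (del_vertices_E (E - {g}) S) u w"
    using nc unfolding connected_graph_def by blast
  let ?E' = "del_vertices_E (E - {g}) S"
  define A where "A = {v \<in> V - S. reachable (V - S) ?E' u v}"
  define B where "B = V - S - A"
  have uA: "u \<in> A" unfolding A_def using uV reach_refl by fast
  have wB: "w \<in> B" unfolding B_def A_def using wV nr by blast
  have nocross: "e \<inter> A = {} \<or> e \<inter> B = {}" if eE: "e \<in> E" and eg: "e \<noteq> g" for e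
  proof (rule ccontr)
    assume "\<not> ?thesis"
    then obtain a b where aA: "a \<in> e" "a \<in> A" and bB: "b \<in> e" "b \<in> B" by blast
    obtain p q where "e = {p, q}" using sg eE by (auto simp: simple_graph_def)
    moreover have "a \<noteq> b" using aA bB unfolding B_def by blast
    ultimately have eab: "e = {a, b}" using two_el aA bB by metis
    have "a \<in> V - S" "b \<in> V - S" using aA bB unfolding A_def B_def by blast+
    then have "{a, b} \<in> ?E'" using eE eg eab by (auto simp: del_vertices_E_def)
    then have "reachable (V - S) ?E' a b" using \<open>a \<in> V - S\<close> \<open>b \<in> V - S\<close> by (rule_tac reach_edge) auto
    then have "reachable (V - S) ?E' u b" using aA unfolding A_def by (blast intro: reach_trans)
    then have "b \<in> A" unfolding A_def using \<open>b \<in> V - S\<close> by blast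
    then show False using bB unfolding B_def by blast
  qed
  have part: "S \<union> A \<union> B = V" "S \<inter> A = {}" "S \<inter> B = {}" "A \<inter> B = {}"
    unfolding A_def B_def using SV by blast+
  obtain e where eE: "e \<in> E" and eA: "e \<inter> A \<noteq> {}" and eB: "e \<inter> B \<noteq> {}"
    using cf part uA wB cS unfolding cutfree_def by (metis empty_iff order_refl)
  have "e = g" using nocross[OF eE] eA eB by blast
  then have "sep V E k g S A B"
    unfolding sep_def using gE part cS eA eB nocross by auto
  then show ?thesis by blast
qed

lemma min_degree:
  assumes sg: "simple_graph V E" and cf: "cutfree V E k" and cV: "k < card V" and vV: "v \<in> V"
  shows "k \<le> degree E v"
proof (rule ccontr)
  assume "\<not> ?thesis"
  then have cN': "card {u. {v, u} \<in> E} < k" unfolding degree_def by simp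
  then have cN: "card {u. {v, u} \<in> E} \<le> k - 1" by simp
  let ?N = "{u. {v, u} \<in> E}"
  have finV: "finite V" using sg by (simp add: simple_graph_def)
  have NV: "?N \<subseteq> V" and vN: "v \<notin> ?N"
    using sg unfolding simple_graph_def by (auto simp: doubleton_eq_iff)
  have finN: "finite ?N" using NV finV by (rule finite_subset)
  have Yne: "V - ?N - {v} \<noteq> {}"
  proof
    assume "V - ?N - {v} = {}"
    then have "V \<subseteq> insert v ?N" by blast
    then have "card V \<le> card (insert v ?N)" using finN by (simp add: card_mono)
    also have "\<dots> = Suc (card ?N)" using finN vN by simp
    finally show False using cN' cV by linarith
  qed
  have "?N \<union> {v} \<union> (V - ?N - {v}) = V" "?N \<inter> {v} = {}" "?N \<inter> (V - ?N - {v}) = {}" "{v} \<inter> (V - ?N - {v}) = {}"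
    using NV vN vV by blast+
  then obtain e where eE: "e \<in> E" and e1: "e \<inter> {v} \<noteq> {}" and e2: "e \<inter> (V - ?N - {v}) \<noteq> {}"
    using cf cN Yne unfolding cutfree_def by (metis insert_not_empty)
  obtain w where "w \<in> e" "w \<in> V - ?N - {v}" using e2 by blast
  moreover have "v \<in> e" using e1 by blast
  moreover obtain p q where "e = {p, q}" using sg eE by (auto simp: simple_graph_def)
  ultimately have "e = {v, w}" using two_el by (metis Diff_iff singletonI)
  then show False using eE \<open>w \<in> V - ?N - {v}\<close> by blast
qed

lemma degree_edges:
  assumes sg: "simple_graph V E"
  shows "degree E v = card {e \<in> E. v \<in> e}"
proof -
  have "bij_betw (\<lambda>u. {v, u}) {u. {v, u} \<in> E} {e \<in> E. v \<in> e}"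
  proof (rule bij_betwI')
    fix a b assume "a \<in> {u. {v, u} \<in> E}" "b \<in> {u. {v, u} \<in> E}"
    show "({v, a} = {v, b}) = (a = b)" by (auto simp: doubleton_eq_iff)
  next
    fix a assume "a \<in> {u. {v, u} \<in> E}" then show "{v, a} \<in> {e \<in> E. v \<in> e}" by simp
  next
    fix e assume e: "e \<in> {e \<in> E. v \<in> e}"
    then obtain p q where "e = {p, q}" using sg by (auto simp: simple_graph_def)
    then have "e = {v, if v = p then q else p}" using e by auto
    then show "\<exists>a\<in>{u. {v, u} \<in> E}. e = {v, a}" using e by (intro bexI[of _ "if v = p then q else p"]) auto
  qed
  then show ?thesis unfolding degree_def by (rule bij_betw_same_card)
qed

lemma handshake:
  assumes "finite E" "finite A"
  shows "(\<Sum>v\<in>A. card {e \<in> E. v \<in> e}) = (\<Sum>e\<in>E. card (e \<inter> A))"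
proof -
  have "(\<Sum>v\<in>A. card {e \<in> E. v \<in> e}) = (\<Sum>v\<in>A. \<Sum>e\<in>E. if v \<in> e then 1 else 0)"
    using assms by (simp add: sum.inter_filter[symmetric])
  also have "\<dots> = (\<Sum>e\<in>E. \<Sum>v\<in>A. if v \<in> e then 1 else 0)" by (rule sum.swap)
  also have "\<dots> = (\<Sum>e\<in>E. card (e \<inter> A))"
  proof (rule sum.cong)
    fix e show "(\<Sum>v\<in>A. if v \<in> e then 1 else 0) = card (e \<inter> A)"
      using assms sum.inter_filter[of A "\<lambda>_. 1::nat" "\<lambda>v. v \<in> e"]
      by (simp add: Int_def conj_commute)
  qed simp
  finally show ?thesis .
qed



lemma comp_step:
  assumes finW: "finite W" and Ew: "\<forall>e\<in>E'. \<exists>a b. a \<noteq> b \<and> a \<in> W \<and> b \<in> W \<and> e = {a, b}"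
    and hE: "h \<in> E'" and vh: "v \<in> h" and leaf: "\<forall>e\<in>E'. v \<in> e \<longrightarrow> e = h"
  shows "num_components W E' + 1 \<le> num_components W (E' - {h})"
proof -
  obtain a b where ab: "a \<noteq> b" "a \<in> W" "b \<in> W" "h = {a, b}" using Ew hE by blast
  define u where "u = (if v = a then b else a)"
  have hu: "h = {v, u}" "u \<noteq> v" "u \<in> W" "v \<in> W" using ab vh unfolding u_def by auto
  let ?E2 = "E' - {h}"
  define c1 where "c1 s = {w \<in> W. reachable W E' s w}" for s
  define c2 where "c2 s = {w \<in> W. reachable W ?E2 s w}" for s
  define \<phi> where "\<phi> C = {w \<in> W. \<exists>t\<in>C. reachable W E' t w}" for C
  have \<phi>c: "\<phi> (c2 s) = c1 s" if "s \<in> W" for s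
  proof
    show "\<phi> (c2 s) \<subseteq> c1 s"
    proof
      fix w assume "w \<in> \<phi> (c2 s)"
      then obtain t where "w \<in> W" "reachable W ?E2 s t" "reachable W E' t w" unfolding \<phi>_def c2_def by blast
      moreover have "reachable W E' s t" using reach_mono[of ?E2 E'] calculation(2) by blast
      ultimately show "w \<in> c1 s" unfolding c1_def using reach_trans by fast
    qed
  next
    show "c1 s \<subseteq> \<phi> (c2 s)"
    proof
      fix w assume "w \<in> c1 s"
      moreover have "s \<in> c2 s" unfolding c2_def using that reach_refl by fast
      ultimately show "w \<in> \<phi> (c2 s)" unfolding c1_def \<phi>_def by blast
    qed
  qed
  have img: "c1 ` W = \<phi> ` (c2 ` W)"
    by (simp add: image_image \<phi>c cong: image_cong)
  have ne: "c2 v \<noteq> c2 u"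
  proof
    assume eq: "c2 v = c2 u"
    have "u \<in> c2 u" unfolding c2_def using hu reach_refl by fast
    then have "reachable W ?E2 v u" using eq unfolding c2_def by blast
    moreover have "\<And>w. {v, w} \<notin> ?E2" using leaf by blast
    ultimately have "u = v" by (rule reach_isolated)
    then show False using hu by simp
  qed
  have r1: "reachable W E' v u" using hu hE by (intro reach_edge) auto
  have r2: "reachable W E' u v" using reach_sym[OF r1] .
  have eq1: "c1 v = c1 u" unfolding c1_def using r1 r2 reach_trans by fast
  have ninj: "\<not> inj_on \<phi> (c2 ` W)"
  proof
    assume "inj_on \<phi> (c2 ` W)"
    moreover have "\<phi> (c2 v) = \<phi> (c2 u)" using \<phi>c hu eq1 by simp
    ultimately have "c2 v = c2 u" using hu by (meson image_eqI inj_onD)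
    then show False using ne by simp
  qed
  have fin2: "finite (c2 ` W)" using finW by simp
  have "card (\<phi> ` (c2 ` W)) < card (c2 ` W)"
    using card_image_le[OF fin2, of \<phi>] inj_on_iff_eq_card[OF fin2, of \<phi>] ninj by linarith
  moreover have "num_components W E' = card (c1 ` W)" by (simp add: num_components_def c1_def)
  moreover have "num_components W ?E2 = card (c2 ` W)" by (simp add: num_components_def c2_def)
  ultimately show ?thesis using img by simp
qed

lemma forest_count:
  assumes finW: "finite W"
  shows "(\<forall>e\<in>E'. \<exists>a b. a \<noteq> b \<and> a \<in> W \<and> b \<in> W \<and> e = {a, b}) \<Longrightarrow>
    (\<forall>D\<subseteq>E'. D \<noteq> {} \<longrightarrow> (\<exists>v h. h \<in> D \<and> v \<in> h \<and> (\<forall>e\<in>D. v \<in> e \<longrightarrow> e = h))) \<Longrightarrow>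
    card E' + num_components W E' \<le> card W"
proof (induction "card E'" arbitrary: E' rule: less_induct)
  case less
  have "E' \<subseteq> Pow W"
  proof
    fix e assume "e \<in> E'"
    then obtain a b where "a \<in> W" "b \<in> W" "e = {a, b}" using less.prems(1) by meson
    then show "e \<in> Pow W" by simp
  qed
  then have finE: "finite E'" using finW by (meson finite_Pow_iff finite_subset)
  show ?case
  proof (cases "E' = {}")
    case True
    have "num_components W E' \<le> card W" unfolding num_components_def by (rule card_image_le[OF finW])
    then show ?thesis using True by simp
  next
    case False
    then obtain v h where hE: "h \<in> E'" and vh: "v \<in> h" and lf: "\<forall>e\<in>E'. v \<in> e \<longrightarrow> e = h"
      using less.prems(2)[rule_format, of E'] by auto
    have lt: "card (E' - {h}) < card E'" using finE hE by (meson card_Diff1_less)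
    have "card (E' - {h}) + num_components W (E' - {h}) \<le> card W"
    proof (rule less.hyps[OF lt])
      show "\<forall>e\<in>E' - {h}. \<exists>a b. a \<noteq> b \<and> a \<in> W \<and> b \<in> W \<and> e = {a, b}"
        using less.prems(1) by simp
      show "\<forall>D\<subseteq>E' - {h}. D \<noteq> {} \<longrightarrow> (\<exists>v h. h \<in> D \<and> v \<in> h \<and> (\<forall>e\<in>D. v \<in> e \<longrightarrow> e = h))"
      proof (intro allI impI)
        fix D assume "D \<subseteq> E' - {h}" "D \<noteq> {}"
        then have "D \<subseteq> E'" by blast
        then show "\<exists>v h. h \<in> D \<and> v \<in> h \<and> (\<forall>e\<in>D. v \<in> e \<longrightarrow> e = h)"
          using less.prems(2) \<open>D \<noteq> {}\<close> by simp
      qed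
    qed
    moreover have "num_components W E' + 1 \<le> num_components W (E' - {h})"
      by (rule comp_step[OF finW less.prems(1) hE vh lf])
    moreover have "card E' = card (E' - {h}) + 1" using finE hE
    proof -
      have "0 < card E'" using finE hE card_gt_0_iff by blast
      then show ?thesis using card_Diff_singleton[OF hE] by simp
    qed
    ultimately show ?thesis by linarith
  qed
qed



theorem mainTheorem1:
  fixes V :: "'a set" and E :: "'a set set" and k :: nat
  assumes "simple_graph V E"
    and "k \<ge> 1"
    and "minimally_k_connected V E k"
  shows "real (card (Vk V E k)) \<ge>
    ((real k - 1) * real (card V)
      + 2 * (real (cF V E k) + real (card (Ek V E k)))
      + max 0 (real (max_degree V E) - (real k + 1))) / (2 * real k - 1)"
proof -
  note sg = assms(1) and k1 = assms(2) and mk = assms(3)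
  define K where "K = Vk V E k"
  define W where "W = V - K"
  have finV: "finite V" using sg by (simp add: simple_graph_def)
  have kc: "k_connected V E k" using mk by (simp add: minimally_k_connected_def)
  have cV: "k < card V" using kc by (simp add: k_connected_def)
  have cf: "cutfree V E k" using kconn_cutfree[OF sg kc k1] .
  have ex: "\<forall>g\<in>E. \<exists>S A B. sep V E k g S A B" using min_sep_exists[OF sg mk k1 cf] by blast
  have mindeg: "k \<le> degree E v" if "v \<in> V" for v using min_degree[OF sg cf cV that] .
  have KV: "K \<subseteq> V" unfolding K_def Vk_def by blast
  have finK: "finite K" using KV finV by (rule finite_subset)
  have finW: "finite W" unfolding W_def using finV by simp
  have edgeV: "\<exists>a b. a \<noteq> b \<and> a \<in> V \<and> b \<in> V \<and> e = {a, b}" if "e \<in> E" for e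
    using sg that by (simp add: simple_graph_def)
  have EPow: "E \<subseteq> Pow V"
  proof
    fix e assume "e \<in> E"
    then obtain a b where "a \<in> V" "b \<in> V" "e = {a, b}" using edgeV by meson
    then show "e \<in> Pow V" by simp
  qed
  have finE: "finite E" using EPow finV by (meson finite_Pow_iff finite_subset)
  define EF where "EF = {e \<in> E. e \<inter> K = {}}"
  have cFd: "cF V E k = num_components W EF"
    by (simp add: cF_def del_vertices_V_def del_vertices_E_def EF_def W_def K_def)
  have degW: "k + 1 \<le> degree E v" if "v \<in> W" for v
  proof -
    have "v \<in> V" "degree E v \<noteq> k" using that unfolding W_def K_def Vk_def by auto
    then show ?thesis using mindeg[of v] by simp
  qed
  have forest: "card EF + num_components W EF \<le> card W"
  proof (rule forest_count[OF finW])
    show "\<forall>e\<in>EF. \<exists>a b. a \<noteq> b \<and> a \<in> W \<and> b \<in> W \<and> e = {a, b}"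
    proof
      fix e assume eF: "e \<in> EF"
      then obtain a b where "a \<noteq> b" "a \<in> V" "b \<in> V" "e = {a, b}" using edgeV unfolding EF_def by blast
      moreover have "e \<inter> K = {}" using eF unfolding EF_def by blast
      ultimately show "\<exists>a b. a \<noteq> b \<and> a \<in> W \<and> b \<in> W \<and> e = {a, b}" unfolding W_def by blast
    qed
    show "\<forall>D\<subseteq>EF. D \<noteq> {} \<longrightarrow> (\<exists>v h. h \<in> D \<and> v \<in> h \<and> (\<forall>e\<in>D. v \<in> e \<longrightarrow> e = h))"
    proof (intro allI impI)
      fix D assume DF: "D \<subseteq> EF" and Dne: "D \<noteq> {}"
      show "\<exists>v h. h \<in> D \<and> v \<in> h \<and> (\<forall>e\<in>D. v \<in> e \<longrightarrow> e = h)"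
      proof (rule ccontr)
        assume nl: "\<not> ?thesis"
        have DE: "D \<subseteq> E" using DF unfolding EF_def by blast
        have degD: "\<forall>v e. e \<in> D \<longrightarrow> v \<in> e \<longrightarrow> k + 1 \<le> degree E v"
        proof (intro allI impI)
          fix v e assume "e \<in> D" "v \<in> e"
          moreover have "e \<in> E" "e \<inter> K = {}" using \<open>e \<in> D\<close> DF unfolding EF_def by blast+
          moreover have "e \<subseteq> V" using EPow \<open>e \<in> E\<close> by blast
          ultimately have "v \<in> W" unfolding W_def by blast
          then show "k + 1 \<le> degree E v" by (rule degW)
        qed
        have twoD: "\<forall>v e. e \<in> D \<longrightarrow> v \<in> e \<longrightarrow> (\<exists>e'\<in>D. e' \<noteq> e \<and> v \<in> e')"
        proof (intro allI impI)
          fix v e assume "e \<in> D" "v \<in> e"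
          then have "\<not> (\<forall>e'\<in>D. v \<in> e' \<longrightarrow> e' = e)" using nl by blast
          then show "\<exists>e'\<in>D. e' \<noteq> e \<and> v \<in> e'" by blast
        qed
        show False by (rule core[OF sg k1 cf ex DE Dne degD twoD])
      qed
    qed
  qed
  have hsK: "(\<Sum>v\<in>K. degree E v) = (\<Sum>e\<in>E. card (e \<inter> K))"
    using handshake[OF finE finK] degree_edges[OF sg] by simp
  have hsW: "(\<Sum>v\<in>W. degree E v) = (\<Sum>e\<in>E. card (e \<inter> W))"
    using handshake[OF finE finW] degree_edges[OF sg] by simp
  have sumK: "(\<Sum>v\<in>K. degree E v) = k * card K"
  proof -
    have "(\<Sum>v\<in>K. degree E v) = (\<Sum>v\<in>K. k)" by (rule sum.cong) (auto simp: K_def Vk_def)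
    then show ?thesis by simp
  qed
  have pe: "card (e \<inter> K) + 2 * (if e \<inter> K = {} then 1 else 0) = card (e \<inter> W) + 2 * (if e \<subseteq> K then 1 else 0)"
    if eE: "e \<in> E" for e
  proof -
    obtain a b where ab: "a \<noteq> b" "a \<in> V" "b \<in> V" "e = {a, b}" using edgeV[OF eE] by blast
    show ?thesis using ab unfolding W_def by (cases "a \<in> K"; cases "b \<in> K") auto
  qed
  have cnt: "(\<Sum>e\<in>E. 2 * (if P e then 1 else 0)) = 2 * card {e \<in> E. P e}" for P :: "'a set \<Rightarrow> bool"
    using finE by (simp add: sum_distrib_left[symmetric] sum.inter_filter[symmetric])
  have hs: "k * card K + 2 * card EF = (\<Sum>v\<in>W. degree E v) + 2 * card (Ek V E k)"
  proof -
    have "(\<Sum>e\<in>E. card (e \<inter> K) + 2 * (if e \<inter> K = {} then 1 else 0))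
        = (\<Sum>e\<in>E. card (e \<inter> W) + 2 * (if e \<subseteq> K then 1 else 0))"
      by (rule sum.cong) (use pe in auto)
    then have "(\<Sum>e\<in>E. card (e \<inter> K)) + 2 * card {e \<in> E. e \<inter> K = {}}
        = (\<Sum>e\<in>E. card (e \<inter> W)) + 2 * card {e \<in> E. e \<subseteq> K}"
      by (simp add: sum.distrib cnt)
    moreover have "Ek V E k = {e \<in> E. e \<subseteq> K}" by (simp add: Ek_def K_def)
    ultimately show ?thesis using hsK hsW sumK unfolding EF_def by simp
  qed
  define \<Delta> where "\<Delta> = max_degree V E"
  have Vne: "V \<noteq> {}" using cV by auto
  obtain w0 where w0V: "w0 \<in> V" and w0d: "degree E w0 = \<Delta>"
  proof -
    have "Max (degree E ` V) \<in> degree E ` V" using finV Vne by (intro Max_in) auto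
    then show ?thesis using that unfolding \<Delta>_def max_degree_def by auto
  qed
  define m where "m = (if k + 2 \<le> \<Delta> then \<Delta> - (k + 1) else 0)"
  have sumW: "(k + 1) * card W + m \<le> (\<Sum>v\<in>W. degree E v)"
  proof (cases "k + 2 \<le> \<Delta>")
    case True
    then have w0W: "w0 \<in> W" using w0V w0d unfolding W_def K_def Vk_def by auto
    have "(\<Sum>v\<in>W. degree E v) = degree E w0 + (\<Sum>v\<in>W - {w0}. degree E v)"
      using sum.remove[OF finW w0W] by simp
    moreover have "(\<Sum>v\<in>W - {w0}. k + 1) \<le> (\<Sum>v\<in>W - {w0}. degree E v)"
      by (rule sum_mono) (use degW in auto)
    moreover have "card (W - {w0}) + 1 = card W" using finW w0W
      by (metis Suc_eq_plus1 card_Suc_Diff1)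
    ultimately have A: "(k + 1) * card (W - {w0}) + \<Delta> \<le> (\<Sum>v\<in>W. degree E v)"
      and B: "card W = card (W - {w0}) + 1"
      using w0d by (simp_all add: mult.commute)
    have "(k + 1) * card W + m = (k + 1) * card (W - {w0}) + \<Delta>"
      unfolding m_def B using True by (simp add: algebra_simps)
    then show ?thesis using A by simp
  next
    case False
    have "(\<Sum>v\<in>W. k + 1) \<le> (\<Sum>v\<in>W. degree E v)" by (rule sum_mono) (use degW in auto)
    then show ?thesis unfolding m_def using False by (simp add: mult.commute)
  qed
  have mreal: "real m = max 0 (real \<Delta> - (real k + 1))"
    unfolding m_def by (cases "k + 2 \<le> \<Delta>") (auto simp: of_nat_diff)
  have cW: "card W + card K = card V" unfolding W_def
    using card_Diff_subset[OF finK KV] card_mono[OF finV KV] by simp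
  define s where "s = (\<Sum>v\<in>W. degree E v)"
  define nc where "nc = num_components W EF"
  have h1: "real k * real (card K) + 2 * real (card EF) = real s + 2 * real (card (Ek V E k))"
    using hs unfolding s_def by (metis of_nat_add of_nat_mult of_nat_numeral)
  have h2: "(real k + 1) * real (card W) + real m \<le> real s"
    using sumW unfolding s_def by (metis of_nat_add of_nat_mult of_nat_1 of_nat_le_iff)
  have h3: "real (card EF) + real nc \<le> real (card W)" using forest unfolding nc_def by simp
  have h4: "real (card W) + real (card K) = real (card V)" using cW by (metis of_nat_add)
  have h5: "real k * real (card V) = real k * real (card W) + real k * real (card K)"
    using h4 by (metis distrib_left)
  have key: "(real k - 1) * real (card V) + 2 * (real nc + real (card (Ek V E k))) + real m
      \<le> real (card K) * (2 * real k - 1)"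
    using h1 h2 h3 h4 h5 by (simp add: algebra_simps)
  have pos: "0 < 2 * real k - 1" using k1 by simp
  show ?thesis
    using key pos mreal unfolding cFd[folded nc_def] K_def[symmetric] \<Delta>_def
    by (simp add: pos_divide_le_eq)
qed


end
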